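(* Let $d \geq 0$ be an integer, $G$ a graph, and $\mathcal{Z}$ a family of $d$-clusters in $G$. Then there exists a family $\mathcal{Z}'$ of pairwise disjoint $(2d)$-clusters in $G$ such that $|\mathcal{Z}'| \leq |\mathcal{Z}|$ and $\bigcup \mathcal{Z} = \bigcup \mathcal{Z}'$.
   Context: For an integer $d\ge 0$, a $d$-cluster in a graph $G$ is a nonempty set $A \subseteq V(G)$ such that $G[A]$ is connected and has diameter at most $d$. *)

theory Defs
  imports Main
begin

definition simple_graph :: "'a set \<Rightarrow> 'a set set \<Rightarrow> bool" where
  "simple_graph V E \<longleftrightarrow> finite V \<and> (\<forall>e\<in>E. \<exists>u v. e = {u, v} \<and> u \<noteq> v \<and> u \<in> V \<and> v \<in> V)"

text \<open>A walk in the induced subgraph G[A]: a nonempty list of vertices of A,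
  consecutive ones adjacent in G. Its length is the number of edges, length - 1.\<close>
definition walk_in :: "'a set set \<Rightarrow> 'a set \<Rightarrow> 'a list \<Rightarrow> bool" where
  "walk_in E A p \<longleftrightarrow> p \<noteq> [] \<and> set p \<subseteq> A \<and>
     (\<forall>i. Suc i < length p \<longrightarrow> {p ! i, p ! Suc i} \<in> E)"

definition dist_le :: "'a set set \<Rightarrow> 'a set \<Rightarrow> 'a \<Rightarrow> 'a \<Rightarrow> nat \<Rightarrow> bool" where
  "dist_le E A x y k \<longleftrightarrow> (\<exists>p. walk_in E A p \<and> hd p = x \<and> last p = y \<and> length p - 1 \<le> k)"

definition cluster :: "'a set \<Rightarrow> 'a set set \<Rightarrow> nat \<Rightarrow> 'a set \<Rightarrow> bool" where
  "cluster V E d A \<longleftrightarrow> A \<noteq> {} \<and> A \<subseteq> V \<and> (\<forall>x\<in>A. \<forall>y\<in>A. dist_le E A x y d)"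

end

theory Submission
  imports Defs
begin

lemma walk_single: "walk_in E A [x] \<longleftrightarrow> x \<in> A"
  by (auto simp: walk_in_def)

lemma walk_Cons2: "walk_in E A (x # y # p) \<longleftrightarrow> x \<in> A \<and> {x,y} \<in> E \<and> walk_in E A (y # p)"
proof
  assume h: "walk_in E A (x # y # p)"
  show "x \<in> A \<and> {x,y} \<in> E \<and> walk_in E A (y # p)"
  proof (intro conjI)
    show "x \<in> A" using h by (auto simp: walk_in_def)
    have "{(x # y # p) ! 0, (x # y # p) ! Suc 0} \<in> E" using h unfolding walk_in_def by (metis length_Cons zero_less_Suc Suc_mono)
    then show "{x,y} \<in> E" by simp
    show "walk_in E A (y # p)" unfolding walk_in_def
    proof (intro conjI allI impI)
      show "set (y # p) \<subseteq> A" using h by (auto simp: walk_in_def)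
      fix i assume "Suc i < length (y # p)"
      then have "Suc (Suc i) < length (x # y # p)" by simp
      then have "{(x # y # p) ! Suc i, (x # y # p) ! Suc (Suc i)} \<in> E" using h unfolding walk_in_def by blast
      then show "{(y # p) ! i, (y # p) ! Suc i} \<in> E" by simp
    qed simp
  qed
next
  assume h: "x \<in> A \<and> {x,y} \<in> E \<and> walk_in E A (y # p)"
  show "walk_in E A (x # y # p)"
    unfolding walk_in_def
  proof (intro conjI allI impI)
    show "set (x # y # p) \<subseteq> A" using h by (auto simp: walk_in_def)
    fix i assume "Suc i < length (x # y # p)"
    then show "{(x # y # p) ! i, (x # y # p) ! Suc i} \<in> E" using h
      by (cases i) (auto simp: walk_in_def)
  qed simp
qed

lemma walk_mono: "walk_in E A p \<Longrightarrow> A \<subseteq> B \<Longrightarrow> walk_in E B p"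
  by (auto simp: walk_in_def)

lemma walk_append: "walk_in E A p \<Longrightarrow> walk_in E A q \<Longrightarrow> last p = hd q \<Longrightarrow> walk_in E A (p @ tl q)"
proof (induction p rule: induct_list012)
  case 1 then show ?case by (simp add: walk_in_def)
next
  case (2 x)
  then show ?case by (cases q) (auto simp: walk_in_def)
next
  case (3 x y zs)
  then show ?case by (simp add: walk_Cons2)
qed

lemma walk_rev: "walk_in E A p \<Longrightarrow> walk_in E A (rev p)"
proof (induction p rule: induct_list012)
  case 1 then show ?case by simp
next
  case (2 x) then show ?case by simp
next
  case (3 x y zs)
  have "walk_in E A (rev (y # zs))" using 3 by (simp add: walk_Cons2)
  moreover have "walk_in E A [y, x]" using 3 by (auto simp: walk_Cons2 walk_single walk_in_def insert_commute)
  ultimately have "walk_in E A (rev (y # zs) @ tl [y, x])"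
    by (intro walk_append) auto
  then show ?case by simp
qed

lemma dist_trans: "dist_le E A x y a \<Longrightarrow> dist_le E A y z b \<Longrightarrow> dist_le E A x z (a + b)"
proof -
  assume "dist_le E A x y a" "dist_le E A y z b"
  then obtain p q where p: "walk_in E A p" "hd p = x" "last p = y" "length p - 1 \<le> a"
    and q: "walk_in E A q" "hd q = y" "last q = z" "length q - 1 \<le> b"
    unfolding dist_le_def by blast
  have ne: "p \<noteq> []" "q \<noteq> []" using p q by (auto simp: walk_in_def)
  have w: "walk_in E A (p @ tl q)" using p q by (intro walk_append) auto
  have "hd (p @ tl q) = x" using p ne by simp
  moreover have "last (p @ tl q) = z"
  proof (cases "tl q = []")
    case True
    then have "q = [hd q]" using ne by (cases q) auto
    then show ?thesis using p q True by (metis append.right_neutral last_ConsL)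
  next
    case False
    then show ?thesis using q ne by (metis last_appendR last_tl)
  qed
  moreover have "length (p @ tl q) - 1 \<le> a + b" using p q ne by auto
  ultimately show ?thesis using w unfolding dist_le_def by blast
qed

lemma dist_sym: "dist_le E A x y a \<Longrightarrow> dist_le E A y x a"
  unfolding dist_le_def
  by (metis walk_rev hd_rev last_rev length_rev)

lemma dist_mono: "dist_le E A x y a \<Longrightarrow> A \<subseteq> B \<Longrightarrow> dist_le E B x y a"
  unfolding dist_le_def using walk_mono by blast

theorem lemma3p8:
  fixes V :: "'a set" and E :: "'a set set" and d :: nat and Z :: "'a set set"
  assumes "simple_graph V E"
    and "\<forall>A\<in>Z. cluster V E d A"
  shows "\<exists>Z'. (\<forall>A\<in>Z'. cluster V E (2 * d) A)
             \<and> (\<forall>A\<in>Z'. \<forall>B\<in>Z'. A \<noteq> B \<longrightarrow> A \<inter> B = {})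
             \<and> card Z' \<le> card Z
             \<and> \<Union> Z = \<Union> Z'"
proof -
  have finV: "finite V" using assms(1) by (simp add: simple_graph_def)
  have "Z \<subseteq> Pow V" using assms(2) by (auto simp: cluster_def)
  then have finZ: "finite Z" using finV by (meson finite_Pow_iff finite_subset)
  define U where "U = \<Union> Z"
  have UV: "U \<subseteq> V" using assms(2) by (auto simp: U_def cluster_def)
  define f where "f A = (SOME c. c \<in> A)" for A :: "'a set"
  have fA: "f A \<in> A" if "A \<in> Z" for A
  proof -
    have "A \<noteq> {}" using assms(2) that by (auto simp: cluster_def)
    then show ?thesis unfolding f_def by (metis ex_in_conv someI_ex)
  qed
  define C where "C = f ` Z"
  have finC: "finite C" using finZ by (simp add: C_def)
  have cardC: "card C \<le> card Z" unfolding C_def using finZ by (rule card_image_le)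
  obtain g :: "'a \<Rightarrow> nat" and n :: nat where g: "g ` C = {i. i < n}" "inj_on g C"
    using finite_imp_inj_to_nat_seg[OF finC] by blast
  have gn: "g c < n" if "c \<in> C" for c
  proof -
    have "g c \<in> g ` C" using that by (rule imageI)
    then show ?thesis unfolding g(1) by simp
  qed
  define D where "D c u = (LEAST k. dist_le E U c u k)" for c u
  have Dle: "D c u \<le> k" if "dist_le E U c u k" for c u k
    unfolding D_def using that by (rule Least_le)
  have Dex: "dist_le E U c u (D c u)" if "dist_le E U c u k" for c u k
    unfolding D_def using that by (rule LeastI)
  define R where "R u = {c\<in>C. \<exists>k. dist_le E U c u k}" for u
  define key where "key c u = D c u * n + g c" for c u
  define cell where "cell c = {u\<in>U. c \<in> R u \<and> (\<forall>c'\<in>R u. key c u \<le> key c' u)}" for c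
  have key_inj: "c = c'" if "c \<in> C" "c' \<in> C" "key c u = key c' u" for c c' u
  proof -
    have "key c u mod n = g c" using gn[OF that(1)] by (simp add: key_def)
    moreover have "key c' u mod n = g c'" using gn[OF that(2)] by (simp add: key_def)
    ultimately have "g c = g c'" using that(3) by simp
    then show ?thesis using g(2) that by (meson inj_onD)
  qed
  have reach: "dist_le E U (f A) u d" if "A \<in> Z" "u \<in> A" for A u
  proof -
    have "dist_le E A (f A) u d" using assms(2) that fA[OF that(1)] by (auto simp: cluster_def)
    moreover have "A \<subseteq> U" using that by (auto simp: U_def)
    ultimately show ?thesis by (rule dist_mono)
  qed
  have cover: "\<exists>c\<in>C. u \<in> cell c" if uU: "u \<in> U" for u
  proof -
    obtain A where A: "A \<in> Z" "u \<in> A" using uU by (auto simp: U_def)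
    have "f A \<in> R u" using reach[OF A] A by (auto simp: R_def C_def)
    then obtain c where c: "c \<in> R u" "\<forall>c'. c' \<in> R u \<longrightarrow> key c u \<le> key c' u"
      using ex_has_least_nat[of "\<lambda>c. c \<in> R u" "f A" "\<lambda>c. key c u"] by blast
    then show ?thesis using uU by (auto simp: cell_def R_def)
  qed
  have cellU: "cell c \<subseteq> U" for c by (auto simp: cell_def)
  have radius: "dist_le E (cell c) c u d" if cC: "c \<in> C" and u: "u \<in> cell c" for c u
  proof -
    have uU: "u \<in> U" and cR: "c \<in> R u" and cmin: "\<forall>c'\<in>R u. key c u \<le> key c' u"
      using u by (auto simp: cell_def)
    obtain A where A: "A \<in> Z" "u \<in> A" using uU by (auto simp: U_def)
    have fAR: "f A \<in> R u" using reach[OF A] A by (auto simp: R_def C_def)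
    have "key c u \<le> key (f A) u" using cmin fAR by blast
    then have "D c u * n + g c \<le> D (f A) u * n + g (f A)" by (simp add: key_def)
    moreover have "g (f A) < n" using gn fAR by (auto simp: R_def)
    ultimately have "D c u * n < (D (f A) u + 1) * n" by simp
    then have "D c u < D (f A) u + 1" by (rule mult_less_cancel2[THEN iffD1, THEN conjunct2])
    moreover have "D (f A) u \<le> d" using Dle reach[OF A] by blast
    ultimately have Dd: "D c u \<le> d" by simp
    define k where "k = D c u"
    have "dist_le E U c u k" unfolding k_def using cR Dex by (auto simp: R_def)
    then obtain p where p: "walk_in E U p" "hd p = c" "last p = u" "length p - 1 \<le> k"
      unfolding dist_le_def by blast
    have pne: "p \<noteq> []" using p by (auto simp: walk_in_def)
    have "set p \<subseteq> cell c"
    proof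
      fix w assume "w \<in> set p"
      then obtain j where j: "j < length p" "p ! j = w" by (auto simp: in_set_conv_nth)
      have wU: "w \<in> U" using p(1) \<open>w \<in> set p\<close> by (auto simp: walk_in_def)
      have p1: "walk_in E U (take (Suc j) p)" using p(1) j by (auto simp: walk_in_def dest: in_set_takeD)
      have "hd (take (Suc j) p) = c" using p(2) pne by simp
      moreover have "last (take (Suc j) p) = w" using j by (simp add: take_Suc_conv_app_nth)
      moreover have "length (take (Suc j) p) - 1 \<le> j" by simp
      ultimately have d1: "dist_le E U c w j" using p1 unfolding dist_le_def by blast
      have p2: "walk_in E U (drop j p)" using p(1) j by (auto simp: walk_in_def dest: in_set_dropD)
      have "hd (drop j p) = w" using j by (simp add: hd_drop_conv_nth)
      moreover have "last (drop j p) = u" using j p(3) by simp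
      moreover have "length (drop j p) - 1 \<le> length p - 1 - j" by simp
      ultimately have d2: "dist_le E U w u (length p - 1 - j)" using p2 unfolding dist_le_def by blast
      have cRw: "c \<in> R w" using d1 cC by (auto simp: R_def)
      have Dcw: "D c w \<le> j" using Dle d1 by blast
      have "key c w \<le> key c' w" if c'R: "c' \<in> R w" for c'
      proof -
        define a where "a = D c' w"
        have "dist_le E U c' w a" unfolding a_def using c'R Dex by (auto simp: R_def)
        then have "dist_le E U c' u (a + (length p - 1 - j))" using d2 by (rule dist_trans)
        then have c'Ru: "c' \<in> R u" and Dc'u: "D c' u \<le> a + (length p - 1 - j)"
          using c'R Dle by (auto simp: R_def)
        have "key c u \<le> key c' u" using cmin c'Ru by blast
        then have "k * n + g c \<le> D c' u * n + g c'" by (simp add: key_def k_def)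
        also have "D c' u * n \<le> (a + (length p - 1 - j)) * n" using Dc'u by simp
        finally have h: "k * n + g c \<le> (a + (length p - 1 - j)) * n + g c'" by simp
        define m where "m = length p - 1 - j"
        have "j + m \<le> k" using p(4) j by (simp add: m_def)
        then have "(j + m) * n \<le> k * n" by simp
        moreover have "k * n + g c \<le> (a + m) * n + g c'" using h unfolding m_def .
        ultimately have "(j + m) * n + g c \<le> (a + m) * n + g c'" by linarith
        then have "j * n + g c \<le> a * n + g c'" by (simp add: algebra_simps)
        moreover have "D c w * n \<le> j * n" using Dcw by (rule mult_right_mono) simp
        ultimately have "D c w * n + g c \<le> D c' w * n + g c'" unfolding a_def by linarith
        then show ?thesis by (simp add: key_def)
      qed
      then show "w \<in> cell c" using wU cRw by (auto simp: cell_def)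
    qed
    then have "walk_in E (cell c) p" using p(1) by (auto simp: walk_in_def)
    then show ?thesis unfolding dist_le_def using p Dd k_def by (intro exI[of _ p]) auto
  qed
  define Z' where "Z' = cell ` C - {{}}"
  have "\<forall>A\<in>Z'. cluster V E (2 * d) A"
  proof
    fix A assume "A \<in> Z'"
    then obtain c where c: "c \<in> C" "A = cell c" "A \<noteq> {}" by (auto simp: Z'_def)
    have "dist_le E A x y (2 * d)" if "x \<in> A" "y \<in> A" for x y
    proof -
      have "dist_le E A x c d" using radius c that by (metis dist_sym)
      moreover have "dist_le E A c y d" using radius c that by metis
      ultimately have "dist_le E A x y (d + d)" by (rule dist_trans)
      then show ?thesis by (simp add: mult_2)
    qed
    then show "cluster V E (2 * d) A" using c cellU UV unfolding cluster_def by blast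
  qed
  moreover have "\<forall>A\<in>Z'. \<forall>B\<in>Z'. A \<noteq> B \<longrightarrow> A \<inter> B = {}"
  proof (intro ballI impI)
    fix A B assume "A \<in> Z'" "B \<in> Z'" "A \<noteq> B"
    then obtain c c' where c: "c \<in> C" "A = cell c" "c' \<in> C" "B = cell c'" by (auto simp: Z'_def)
    show "A \<inter> B = {}"
    proof (rule ccontr)
      assume "A \<inter> B \<noteq> {}"
      then obtain u where "u \<in> cell c" "u \<in> cell c'" using c by auto
      then have "key c u = key c' u" by (auto simp: cell_def intro: order.antisym)
      then have "c = c'" using key_inj c by blast
      then show False using c \<open>A \<noteq> B\<close> by simp
    qed
  qed
  moreover have "card Z' \<le> card Z"
  proof -
    have "card Z' \<le> card (cell ` C)" unfolding Z'_def using finC by (intro card_mono) auto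
    also have "\<dots> \<le> card C" using finC by (rule card_image_le)
    finally show ?thesis using cardC by simp
  qed
  moreover have "\<Union> Z = \<Union> Z'"
  proof
    show "\<Union> Z \<subseteq> \<Union> Z'"
    proof
      fix u assume "u \<in> \<Union> Z"
      then obtain c where "c \<in> C" "u \<in> cell c" using cover by (auto simp: U_def)
      then show "u \<in> \<Union> Z'" by (auto simp: Z'_def)
    qed
    show "\<Union> Z' \<subseteq> \<Union> Z" using cellU by (auto simp: Z'_def U_def)
  qed
  ultimately show ?thesis by blast
qed

end
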